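(* Let $m\geq 3$ and $n\in \mathbb{N}$. Then \[ \sigma'_m(n) = -n\, e_{m+2,n}+\sum_{k=1}^{n-1} (-1)^{k+1} \big( \sigma'_m(n-P_{m+2,k})+\sigma'_m(n- Q_{m+2,k}) \big), \] where $P_{m+2,k}=\frac{k(mk-(m-2))}{2}$ and $Q_{m+2,k}=\frac{k(mk+(m-2))}{2}$.
   Context: For $m\ge3$ and $n\in\mathbb{N}$, $\sigma'_m(n)$ is the sum of the positive divisors $d$ of $n$ with $d\equiv 0$, $1$ or $m-1 \pmod m$; set $\sigma'_m(x)=0$ for integers $x\le 0$. For $g\ge5$ and $n\in\mathbb{N}_0$, $e_{g,n}=1$ if $n=0$, $e_{g,n}=(-1)^k$ if $n=P_{g,k}$ or $n=Q_{g,k}$ for some $k\in\mathbb{N}$ (where $P_{g,k}=\frac{k((g-2)k-(g-4))}{2}$, $Q_{g,k}=\frac{k((g-2)k+(g-4))}{2}$), and $e_{g,n}=0$ otherwise. *)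

theory Defs
  imports Main
begin

definition sigma' :: "nat \<Rightarrow> int \<Rightarrow> int" where
  "sigma' m x = (if x \<le> 0 then 0 else
     \<Sum>d \<in> {d. d dvd nat x \<and> (d mod m = 0 \<or> d mod m = 1 \<or> d mod m = m - 1)}. int d)"

definition Pg :: "nat \<Rightarrow> nat \<Rightarrow> int" where
  "Pg g k = (int k * ((int g - 2) * int k - (int g - 4))) div 2"

definition Qg :: "nat \<Rightarrow> nat \<Rightarrow> int" where
  "Qg g k = (int k * ((int g - 2) * int k + (int g - 4))) div 2"

definition eg :: "nat \<Rightarrow> nat \<Rightarrow> int" where
  "eg g n = (if n = 0 then 1
     else if \<exists>k\<ge>1. int n = Pg g k \<or> int n = Qg g k
       then (-1) ^ (THE k. k \<ge> 1 \<and> (int n = Pg g k \<or> int n = Qg g k))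
     else 0)"

end

theory Submission
  imports Defs "HOL-Computational_Algebra.Formal_Power_Series"
begin
unbundle fps_syntax

fun qb :: "'a::comm_ring_1 \<Rightarrow> nat \<Rightarrow> nat \<Rightarrow> 'a" where
  "qb p 0 j = (if j = 0 then 1 else 0)"
| "qb p (Suc N) j = (if j = 0 then 1 else p^j * qb p N j + qb p N (j-1))"

fun tri :: "nat \<Rightarrow> nat" where
  "tri 0 = 0" | "tri (Suc i) = tri i + i"

lemma qb_gt: "N < j \<Longrightarrow> qb p N j = 0"
  by (induction N arbitrary: j) auto

lemma qb_0: "qb p N 0 = 1"
  by (cases N) auto

lemma qb_Suc': "qb p (Suc N) j = p^j * qb p N j + (if j = 0 then 0 else qb p N (j-1))"
  by (auto simp: qb_0)

lemma qb_diag: "qb p N N = 1"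
  by (induction N) (auto simp: qb_gt)

lemma qbinom:
  fixes u v p :: "'a::comm_ring_1"
  shows "(\<Prod>t<N. u + v * p^t) = (\<Sum>j\<le>N. qb p N j * p^(tri j) * v^j * u^(N-j))"
proof (induction N arbitrary: v)
  case 0
  then show ?case by simp
next
  case (Suc N)
  have "(\<Prod>t<Suc N. u + v * p^t) = (u + v) * (\<Prod>t<N. u + (v*p) * p^t)"
    by (simp only: prod.lessThan_Suc_shift) (simp add: mult.assoc)
  also have "\<dots> = (u+v) * (\<Sum>j\<le>N. qb p N j * p^(tri j) * (v*p)^j * u^(N-j))"
    using Suc by simp
  also have "\<dots> = (\<Sum>j\<le>N. qb p N j * p^(tri j) * (v*p)^j * u^(Suc N-j))
      + (\<Sum>j\<le>N. qb p N j * p^(tri (Suc j)) * v^(Suc j) * u^(N-j))"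
    by (simp add: distrib_right sum_distrib_left Suc_diff_le power_add mult_ac power_mult_distrib sum.distrib)
  also have "(\<Sum>j\<le>N. qb p N j * p^(tri j) * (v*p)^j * u^(Suc N-j))
      = (\<Sum>j\<le>Suc N. p^j * qb p N j * p^(tri j) * v^j * u^(Suc N-j))"
    by (simp add: qb_gt power_mult_distrib mult_ac)
  also have "(\<Sum>j\<le>N. qb p N j * p^(tri (Suc j)) * v^(Suc j) * u^(N-j))
      = (\<Sum>j\<le>Suc N. (if j = 0 then 0 else qb p N (j-1)) * p^(tri j) * v^j * u^(Suc N-j))"
    by (simp only: sum.atMost_Suc_shift) simp
  also have "(\<Sum>j\<le>Suc N. p^j * qb p N j * p^(tri j) * v^j * u^(Suc N-j))
      + (\<Sum>j\<le>Suc N. (if j = 0 then 0 else qb p N (j-1)) * p^(tri j) * v^j * u^(Suc N-j))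
      = (\<Sum>j\<le>Suc N. qb p (Suc N) j * p^(tri j) * v^j * u^(Suc N-j))"
    by (simp only: qb_Suc' sum.distrib[symmetric] distrib_right)
  finally show ?case .
qed

definition poch :: "'a::comm_ring_1 \<Rightarrow> nat \<Rightarrow> 'a" where
  "poch p k = (\<Prod>i\<in>{1..k}. 1 - p^i)"

lemma poch_0[simp]: "poch p 0 = 1" by (simp add: poch_def)

lemma poch_Suc: "poch p (Suc k) = poch p k * (1 - p^Suc k)"
  by (simp add: poch_def prod.cl_ivl_Suc)

lemma qb_poch: "j \<le> N \<Longrightarrow> qb p N j * poch p j * poch p (N-j) = poch p N"
proof (induction N arbitrary: j)
  case 0
  then show ?case by simp
next
  case (Suc N)
  show ?case
  proof (cases "j = 0")
    case True
    then show ?thesis by (simp add: qb_0)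
  next
    case False
    show ?thesis
    proof (cases "j = Suc N")
      case True
      then show ?thesis by (simp add: qb_diag)
    next
      case False2: False
      then have jN: "j \<le> N" using Suc.prems by simp
      obtain i where ji: "j = Suc i" using False by (cases j) auto
      have e1: "Suc N - j = Suc (N - j)" using jN by simp
      have e2: "N - i = Suc (N - j)" using jN ji by simp
      have h1: "qb p N j * poch p j * poch p (N-j) = poch p N" using Suc.IH jN by simp
      have h2: "qb p N i * poch p i * poch p (N-i) = poch p N" using Suc.IH jN ji by simp
      have pp: "p^j * p^(Suc (N-j)) = p^(Suc N)"
      proof -
        have "j + Suc (N-j) = Suc N" using jN by simp
        then show ?thesis by (metis power_add)
      qed
      have f1: "qb p (Suc N) j = p^j * qb p N j + qb p N i" using ji by simp
      have f2: "poch p j = poch p i * (1 - p^j)" using ji by (simp add: poch_Suc)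
      have f3: "poch p (Suc N - j) = poch p (N-j) * (1 - p^(Suc (N-j)))" using e1 by (simp add: poch_Suc)
      have f4: "poch p (N - i) = poch p (N-j) * (1 - p^(Suc (N-j)))" using e2 by (simp add: poch_Suc)
      have "qb p (Suc N) j * poch p j * poch p (Suc N - j)
          = p^j * (qb p N j * poch p j * poch p (N-j)) * (1 - p^(Suc (N-j)))
            + (qb p N i * poch p i * poch p (N-i)) * (1 - p^j)"
        unfolding f1 f3 f4 by (simp add: f2 algebra_simps)
      also have "\<dots> = poch p N * (p^j - p^j * p^(Suc (N-j)) + 1 - p^j)"
        unfolding h1 h2 by (simp add: algebra_simps)
      also have "\<dots> = poch p N * (1 - p^j * p^(Suc (N-j)))"
        by (simp add: algebra_simps)
      also have "\<dots> = poch p (Suc N)"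
        by (simp only: pp poch_Suc)
      finally show ?thesis .
    qed
  qed
qed

definition low :: "nat \<Rightarrow> int fps \<Rightarrow> bool" where
  "low d A \<longleftrightarrow> (\<forall>k<d. A $ k = (if k = 0 then 1 else 0))"

lemma low_mult:
  assumes "low d A" "low d B" shows "low d (A*B)"
  unfolding low_def
proof (intro allI impI)
  fix k assume k: "k < d"
  have "(A*B) $ k = (\<Sum>i=0..k. A $ i * B $ (k-i))" by (simp add: fps_mult_nth)
  also have "\<dots> = (\<Sum>i=0..k. (if i = 0 then B $ k else 0))"
    by (rule sum.cong) (use assms k in \<open>auto simp: low_def\<close>)
  also have "\<dots> = B $ k" by simp
  finally show "(A*B) $ k = (if k = 0 then 1 else 0)" using assms k by (simp add: low_def)
qed

lemma low_one: "low d 1" by (simp add: low_def)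

lemma low_prod: "finite I \<Longrightarrow> (\<And>i. i \<in> I \<Longrightarrow> low d (f i)) \<Longrightarrow> low d (\<Prod>i\<in>I. f i)"
  by (induction I rule: finite_induct) (auto intro: low_mult low_one)

lemma low_1X: "d \<le> e \<Longrightarrow> low d (1 - fps_X^e)"
  by (auto simp: low_def)

lemma low_mono: "low d A \<Longrightarrow> d' \<le> d \<Longrightarrow> low d' A"
  by (auto simp: low_def)

lemma poch_split: "k \<le> l \<Longrightarrow> poch p l = poch p k * (\<Prod>i\<in>{Suc k..l}. 1 - p^i)"
proof -
  assume "k \<le> l"
  then have "{1..l} = {1..k} \<union> {Suc k..l}" by auto
  then show ?thesis unfolding poch_def
    by (simp add: prod.union_disjoint[symmetric] ivl_disj_int)
qed

lemma low_poch_prod: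
  assumes "m \<ge> 1" "\<And>i. i \<in> I \<Longrightarrow> i \<ge> d" "finite I"
  shows "low (m*d) (\<Prod>i\<in>I. 1 - (fps_X^m)^i)"
  using assms(3)
proof (rule low_prod)
  fix i assume "i \<in> I"
  then have "m*d \<le> m*i" using assms(2) by simp
  then show "low (m*d) (1 - (fps_X^m)^i)" by (simp add: power_mult[symmetric] low_1X)
qed

lemma poch_nz: "m \<ge> 1 \<Longrightarrow> poch ((fps_X::int fps)^m) b \<noteq> 0"
proof -
  assume m: "m \<ge> 1"
  have "low (m*1) (poch ((fps_X::int fps)^m) b)" unfolding poch_def
    by (rule low_poch_prod) (use m in auto)
  then have "low 1 (poch ((fps_X::int fps)^m) b)" by (rule low_mono) (use m in auto)
  then have "poch ((fps_X::int fps)^m) b $ 0 = 1" by (simp add: low_def)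
  then show ?thesis by auto
qed

lemma qbpoch_low:
  assumes m: "m \<ge> 1" and j: "j \<le> 2*n"
  shows "low (m * (min j (2*n-j) + 1)) (qb ((fps_X::int fps)^m) (2*n) j * poch (fps_X^m) n)"
proof -
  define p where "p = (fps_X::int fps)^m"
  define a where "a = min j (2*n-j)"
  define b where "b = max j (2*n-j)"
  have ab: "a \<le> n" "n \<le> b" "b \<le> 2*n" using j by (auto simp: a_def b_def)
  have q: "qb p (2*n) j * poch p a * poch p b = poch p (2*n)"
  proof (cases "j \<le> n")
    case True
    then have "a = j" "b = 2*n-j" by (auto simp: a_def b_def)
    then show ?thesis using qb_poch[OF j, of p] by simp
  next
    case False
    then have "a = 2*n-j" "b = j" "2*n - (2*n-j) = j" using j by (auto simp: a_def b_def)
    then show ?thesis using qb_poch[OF j, of p] by (simp add: mult_ac)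
  qed
  define R1 where "R1 = (\<Prod>i\<in>{Suc b..2*n}. 1 - p^i)"
  define R2 where "R2 = (\<Prod>i\<in>{Suc a..n}. 1 - p^i)"
  have s1: "poch p (2*n) = poch p b * R1" using poch_split[OF ab(3)] by (simp add: R1_def)
  have s2: "poch p n = poch p a * R2" using poch_split[OF ab(1)] by (simp add: R2_def)
  have "poch p b * (qb p (2*n) j * poch p n) = poch p b * (R1 * R2)"
    using q s1 s2 by (simp add: mult_ac)
  then have eq: "qb p (2*n) j * poch p n = R1 * R2"
    using poch_nz[OF m, of b] by (simp add: p_def)
  have "low (m*(a+1)) R1" unfolding R1_def p_def
    by (rule low_poch_prod) (use m ab in auto)
  moreover have "low (m*(a+1)) R2" unfolding R2_def p_def
    by (rule low_poch_prod) (use m ab in auto)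
  ultimately have "low (m*(a+1)) (R1*R2)" by (rule low_mult)
  then show ?thesis using eq by (simp add: p_def a_def)
qed

definition gg :: "nat \<Rightarrow> int \<Rightarrow> int" where
  "gg m s = s * (int m * s - int m + 2) div 2"

lemma gg2: "2 * gg m s = s * (int m * s - int m + 2)"
proof -
  have "s * (int m * s - int m + 2) = 2 * (int m * (s * (s - 1) div 2) + s)"
  proof -
    have "even (s * (s - 1))" by auto
    then have "2 * (s * (s - 1) div 2) = s * (s-1)" by simp
    then have "2 * (int m * (s * (s - 1) div 2) + s) = int m * (s*(s-1)) + 2*s"
      by (metis distrib_left mult.left_commute)
    then show ?thesis by (simp add: algebra_simps)
  qed
  then show ?thesis unfolding gg_def by simp
qed

lemma gg_nonneg: "m \<ge> 1 \<Longrightarrow> gg m s \<ge> 0"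
proof -
  assume m: "m \<ge> 1"
  have "s * (int m * s - int m + 2) = int m * (s * (s - 1)) + 2 * s" by (simp add: algebra_simps)
  moreover have "s * (s-1) \<ge> 0" by (cases "s \<ge> 1") (auto simp: mult_nonpos_nonpos zero_le_mult_iff)
  moreover have "int m * (s * (s - 1)) \<ge> s * (s-1)" using m \<open>s * (s-1) \<ge> 0\<close>
    using mult_right_mono[of 1 "int m" "s*(s-1)"] m by simp
  moreover have "s * (s-1) + 2 * s \<ge> 0"
  proof -
    have "s * (s-1) + 2*s = s*(s+1)" by (simp add: algebra_simps)
    moreover have "s*(s+1) \<ge> 0" by (cases "s \<ge> 0") (auto simp: mult_nonpos_nonpos zero_le_mult_iff)
    ultimately show ?thesis by simp
  qed
  ultimately have "2 * gg m s \<ge> 0" using gg2[of m s] by linarith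
  then show ?thesis by simp
qed

lemma tri2: "2 * tri j = j * (j - 1)"
proof (induction j)
  case (Suc j)
  have "j*(j-1) + 2*j = Suc j * j" by (cases j) auto
  then show ?case using Suc by simp
qed simp

lemma tri_sum: "tri n = (\<Sum>t<n. t)"
  by (induction n) auto

lemma expo:
  assumes m: "m \<ge> 1" and n: "n \<ge> 1" and j: "j \<le> 2*n"
  shows "m*tri j + (m*n-1)*(2*n-j) = (m*tri n + (m*n-1)*n) + nat (gg m (int j - int n))"
proof -
  have mn: "m*n \<ge> 1" using m n by simp
  have Tj: "2 * int (tri j) = int j * (int j - 1)"
    using arg_cong[OF tri2[of j], of int] by (cases j) (auto simp: algebra_simps)
  have Tn: "2 * int (tri n) = int n * (int n - 1)"
    using arg_cong[OF tri2[of n], of int] by (cases n) (auto simp: algebra_simps)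
  have D1: "int ((m*n-1)*(2*n-j)) = (int m * int n - 1) * (2*int n - int j)"
    using mn j by (simp add: of_nat_diff)
  have D2: "int ((m*n-1)*n) = (int m * int n - 1) * int n"
    using mn by (simp add: of_nat_diff)
  have G: "int (nat (gg m (int j - int n))) = gg m (int j - int n)" using gg_nonneg[OF m] by simp
  have "int (m*tri j + (m*n-1)*(2*n-j)) * 2 = int m * (2 * int (tri j)) + 2 * int ((m*n-1)*(2*n-j))"
    by (simp add: algebra_simps)
  also have "\<dots> = int m * (int j * (int j - 1)) + 2 * ((int m * int n - 1) * (2*int n - int j))"
    by (simp only: Tj D1)
  also have "\<dots> = int m * (int n * (int n - 1)) + 2 * ((int m * int n - 1) * int n) + 2 * gg m (int j - int n)"
    by (simp add: gg2 algebra_simps)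
  also have "\<dots> = int m * (2 * int (tri n)) + 2 * int ((m*n-1)*n) + 2 * int (nat (gg m (int j - int n)))"
    by (simp only: Tn D2 G)
  also have "\<dots> = int ((m*tri n + (m*n-1)*n) + nat (gg m (int j - int n))) * 2"
    by (simp add: algebra_simps)
  finally have "int (m*tri j + (m*n-1)*(2*n-j)) = int ((m*tri n + (m*n-1)*n) + nat (gg m (int j - int n)))" by (rule mult_right_cancel[THEN iffD1, rotated]) simp
  then show ?thesis by (simp only: of_nat_eq_iff)
qed

lemma jtp_fin:
  fixes m n :: nat
  assumes m: "m \<ge> 1" and n: "n \<ge> 1"
  shows "(-1)^n * (\<Prod>t<n. 1 - (fps_X::int fps)^(m*(n-t)-1)) * (\<Prod>i<n. 1 - (fps_X::int fps)^(m*i+1))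
    = (\<Sum>j\<le>2*n. qb ((fps_X::int fps)^m) (2*n) j * (-1)^j * fps_X^(nat (gg m (int j - int n))))"
proof -
  define X where "X = (fps_X::int fps)"
  define A where "A = (\<Prod>t<n. 1 - X^(m*(n-t)-1))"
  define B where "B = (\<Prod>i<n. 1 - X^(m*i+1))"
  define f where "f t = X^(m*n-1) + (-1) * (X^m)^t" for t
  define c where "c = m*tri n + (m*n-1)*n"
  have mn: "m*n \<ge> 1" using m n by simp
  have Q: "(\<Prod>t<2*n. f t) = (\<Sum>j\<le>2*n. qb (X^m) (2*n) j * (X^m)^(tri j) * (-1)^j * (X^(m*n-1))^(2*n-j))"
    unfolding f_def by (rule qbinom)
  have split: "(\<Prod>t<2*n. f t) = (\<Prod>t<n. f t) * (\<Prod>t\<in>{n..<2*n}. f t)"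
  proof -
    have "{..<2*n} = {..<n} \<union> {n..<2*n}" by auto
    moreover have "prod f ({..<n} \<union> {n..<2*n}) = prod f {..<n} * prod f {n..<2*n}"
      by (rule prod.union_disjoint) auto
    ultimately show ?thesis by simp
  qed
  have P1: "(\<Prod>t<n. f t) = (-1)^n * X^(m*tri n) * A"
  proof -
    have "f t = (-1) * X^(m*t) * (1 - X^(m*(n-t)-1))" if t: "t < n" for t
    proof -
      have "m*t < m*n" using t m by simp
      moreover have "m*(n-t) = m*n - m*t" by (simp add: diff_mult_distrib2)
      ultimately have "m*t + (m*(n-t)-1) = m*n - 1" by linarith
      then have "X^(m*n-1) = X^(m*t) * X^(m*(n-t)-1)" by (metis power_add)
      then show ?thesis unfolding f_def by (simp add: power_mult[symmetric] algebra_simps)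
    qed
    then have "(\<Prod>t<n. f t) = (\<Prod>t<n. (-1) * X^(m*t) * (1 - X^(m*(n-t)-1)))"
      by (intro prod.cong) auto
    also have "\<dots> = (-1)^n * (\<Prod>t<n. X^(m*t)) * A"
      by (simp only: prod.distrib prod_constant card_lessThan A_def)
    also have "(\<Prod>t<n. X^(m*t)) = X^(\<Sum>t<n. m*t)" by (simp add: power_sum)
    also have "(\<Sum>t<n. m*t) = m * tri n" by (simp add: tri_sum sum_distrib_left)
    finally show ?thesis .
  qed
  have P2: "(\<Prod>t\<in>{n..<2*n}. f t) = X^((m*n-1)*n) * B"
  proof -
    have "(\<Prod>t\<in>{n..<2*n}. f t) = (\<Prod>t\<in>{0+n..<n+n}. f t)" by (simp add: mult_2)
    also have "\<dots> = (\<Prod>i\<in>{0..<n}. f (i+n))" by (rule prod.shift_bounds_nat_ivl)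
    also have "\<dots> = (\<Prod>i<n. X^(m*n-1) * (1 - X^(m*i+1)))"
    proof (intro prod.cong)
      fix i assume "i \<in> {..<n}"
      have "m*(i+n) = (m*n-1) + (m*i+1)" using mn by (simp add: algebra_simps)
      then have "X^(m*(i+n)) = X^(m*n-1) * X^(m*i+1)" by (metis power_add)
      then show "f (i+n) = X^(m*n-1) * (1 - X^(m*i+1))"
        unfolding f_def by (simp add: power_mult[symmetric] algebra_simps)
    qed auto
    also have "\<dots> = X^((m*n-1)*n) * B"
      by (simp add: prod.distrib B_def power_mult)
    finally show ?thesis .
  qed
  have R: "(\<Sum>j\<le>2*n. qb (X^m) (2*n) j * (X^m)^(tri j) * (-1)^j * (X^(m*n-1))^(2*n-j))
      = X^c * (\<Sum>j\<le>2*n. qb (X^m) (2*n) j * (-1)^j * X^(nat (gg m (int j - int n))))"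
    unfolding sum_distrib_left
  proof (intro sum.cong refl)
    fix j assume "j \<in> {..2*n}"
    then have "j \<le> 2*n" by simp
    have "(X^m)^(tri j) * (X^(m*n-1))^(2*n-j) = X^(m*tri j + (m*n-1)*(2*n-j))"
      by (simp add: power_mult[symmetric] power_add)
    also have "\<dots> = X^c * X^(nat (gg m (int j - int n)))"
      unfolding expo[OF m n \<open>j \<le> 2*n\<close>] c_def by (simp add: power_add)
    finally have "(X^m)^(tri j) * (X^(m*n-1))^(2*n-j) = X^c * X^(nat (gg m (int j - int n)))" .
    then show "qb (X^m) (2*n) j * (X^m)^(tri j) * (-1)^j * (X^(m*n-1))^(2*n-j)
      = X^c * (qb (X^m) (2*n) j * (-1)^j * X^(nat (gg m (int j - int n))))"
    proof -
      have "qb (X^m) (2*n) j * (X^m)^(tri j) * (-1)^j * (X^(m*n-1))^(2*n-j)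
        = qb (X^m) (2*n) j * (-1)^j * ((X^m)^(tri j) * (X^(m*n-1))^(2*n-j))"
        by (simp only: mult_ac)
      also have "\<dots> = qb (X^m) (2*n) j * (-1)^j * (X^c * X^(nat (gg m (int j - int n))))"
        by (simp only: \<open>(X^m)^(tri j) * (X^(m*n-1))^(2*n-j) = X^c * X^(nat (gg m (int j - int n)))\<close>)
      finally show ?thesis by (simp only: mult_ac)
    qed
  qed
  have "X^c * ((-1)^n * A * B) = X^c * (\<Sum>j\<le>2*n. qb (X^m) (2*n) j * (-1)^j * X^(nat (gg m (int j - int n))))"
  proof -
    have "X^c * ((-1)^n * A * B) = (\<Prod>t<2*n. f t)"
      unfolding split P1 P2 c_def power_add by (simp only: mult_ac)
    then show ?thesis using Q R by simp
  qed
  moreover have Xc: "X^c \<noteq> 0" by (simp add: X_def)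
  ultimately have "(-1)^n * A * B = (\<Sum>j\<le>2*n. qb (X^m) (2*n) j * (-1)^j * X^(nat (gg m (int j - int n))))"
    using mult_left_cancel[OF Xc] by blast
  then show ?thesis by (simp add: X_def A_def B_def)
qed

lemma ineq_int:
  fixes M N s G :: int
  assumes M: "M \<ge> 3" and N: "N \<ge> 1" and s: "-N \<le> s" "s \<le> N" and G: "2*G = s*(M*s - M + 2)"
  shows "N < G + M*(N - \<bar>s\<bar> + 1)"
proof (cases "s \<ge> 0")
  case True
  have "(s-1)*(s-2) \<ge> 0" by (cases "s \<ge> 2"; cases "s = 1"; cases "s = 0") (use True in auto)
  then have a: "M*((s-1)*(s-2)) \<ge> 0" using M by simp
  have b: "M*N \<ge> 3*N" using M N by (simp add: mult_right_mono)
  have "2*(G + M*(N - \<bar>s\<bar> + 1)) = M*((s-1)*(s-2)) + 2*s + 2*(M*N)"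
    using G True by (simp add: algebra_simps)
  then have "2*(G + M*(N - \<bar>s\<bar> + 1)) > 2*N" using a b True N by linarith
  then show ?thesis by simp
next
  case False
  define r where "r = -s"
  have r: "r \<ge> 1" "r \<le> N" using False s by (auto simp: r_def)
  have "r*(r-1) \<ge> 0" using r by simp
  then have a: "M*(r*(r-1)) \<ge> 0" using M by simp
  have b: "M*N \<ge> 3*N" using M N by (simp add: mult_right_mono)
  have "2*(G + M*(N - \<bar>s\<bar> + 1)) = M*(r*(r-1)) + 2*M - 2*r + 2*(M*N)"
    using G False by (simp add: r_def algebra_simps)
  then have "2*(G + M*(N - \<bar>s\<bar> + 1)) > 2*N" using a b r M by linarith
  then show ?thesis by simp
qed

lemma ineq_nat:
  assumes m: "m \<ge> 3" and n: "n \<ge> 1" and j: "j \<le> 2*n" and i: "i \<le> n"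
  shows "i - nat (gg m (int j - int n)) < m * (min j (2*n-j) + 1)"
proof -
  have "int n < gg m (int j - int n) + int m * (int n - \<bar>int j - int n\<bar> + 1)"
    by (rule ineq_int[OF _ _ _ _ gg2]) (use m n j in auto)
  moreover have hk: "int (min j (2*n-j)) = int n - \<bar>int j - int n\<bar>" using j by auto
  moreover have "int (m * (min j (2*n-j) + 1)) = int m * (int n - \<bar>int j - int n\<bar> + 1)"
    by (simp only: of_nat_mult of_nat_add hk of_nat_1)
  moreover have "gg m (int j - int n) \<ge> 0" using gg_nonneg m by simp
  ultimately have "int n < int (nat (gg m (int j - int n))) + int (m * (min j (2*n-j) + 1))"
    by simp
  then have "n < nat (gg m (int j - int n)) + m * (min j (2*n-j) + 1)"
    by (simp only: of_nat_add[symmetric] of_nat_less_iff)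
  moreover have "m * (min j (2*n-j) + 1) > 0" using m by simp
  moreover have "\<And>a b. n < a + b \<Longrightarrow> i \<le> n \<Longrightarrow> b > 0 \<Longrightarrow> i - a < (b::nat)" by arith
  ultimately show ?thesis using i by blast
qed

lemma neg1_nth: "(((-1)^k :: int fps) * f) $ i = (-1)^k * (f $ i)"
  by (induction k) auto

lemma F_coeff:
  fixes m n :: nat
  assumes m: "m \<ge> 3" and n: "n \<ge> 1" and i: "i \<le> n"
  shows "(poch ((fps_X::int fps)^m) n * (\<Prod>t<n. 1 - (fps_X::int fps)^(m*(n-t)-1)) * (\<Prod>i<n. 1 - (fps_X::int fps)^(m*i+1))) $ i
    = (\<Sum>j\<le>2*n. (-1)^(n+j) * (if nat (gg m (int j - int n)) = i then 1 else 0))"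
proof -
  define X where "X = (fps_X::int fps)"
  define P where "P = poch (X^m) n"
  define ge where "ge j = nat (gg m (int j - int n))" for j
  have m1: "m \<ge> 1" using m by simp
  have "P * ((-1)^n * (\<Prod>t<n. 1 - X^(m*(n-t)-1)) * (\<Prod>i<n. 1 - X^(m*i+1)))
     = P * (\<Sum>j\<le>2*n. qb (X^m) (2*n) j * (-1)^j * X^(ge j))"
    using jtp_fin[OF m1 n] by (simp add: X_def ge_def)
  then have "(-1)^n * (P * ((-1)^n * (\<Prod>t<n. 1 - X^(m*(n-t)-1)) * (\<Prod>i<n. 1 - X^(m*i+1))))
     = (-1)^n * (P * (\<Sum>j\<le>2*n. qb (X^m) (2*n) j * (-1)^j * X^(ge j)))" by simp
  then have E: "P * (\<Prod>t<n. 1 - X^(m*(n-t)-1)) * (\<Prod>i<n. 1 - X^(m*i+1))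
     = (\<Sum>j\<le>2*n. (-1)^(n+j) * (qb (X^m) (2*n) j * P) * X^(ge j))"
    by (simp add: sum_distrib_left power_add algebra_simps)
  have "(\<Sum>j\<le>2*n. (-1)^(n+j) * (qb (X^m) (2*n) j * P) * X^(ge j)) $ i
     = (\<Sum>j\<le>2*n. (-1)^(n+j) * (if ge j = i then 1 else 0))"
    unfolding fps_sum_nth
  proof (intro sum.cong refl)
    fix j assume "j \<in> {..2*n}"
    then have j: "j \<le> 2*n" by simp
    have L: "low (m * (min j (2*n-j) + 1)) (qb (X^m) (2*n) j * P)"
      unfolding X_def P_def by (rule qbpoch_low[OF m1 j])
    have "((-1)^(n+j) * (qb (X^m) (2*n) j * P) * X^(ge j)) $ i
        = (-1)^(n+j) * (if i < ge j then 0 else (qb (X^m) (2*n) j * P) $ (i - ge j))"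
      unfolding X_def by (simp only: fps_X_power_mult_right_nth neg1_nth) simp
    also have "\<dots> = (-1)^(n+j) * (if ge j = i then 1 else 0)"
    proof (cases "i < ge j")
      case False
      have "i - ge j < m * (min j (2*n-j) + 1)" unfolding ge_def by (rule ineq_nat[OF m n j i])
      then have "(qb (X^m) (2*n) j * P) $ (i - ge j) = (if i - ge j = 0 then 1 else 0)"
        using L by (simp add: low_def)
      then show ?thesis using False by auto
    qed auto
    finally show "((-1)^(n+j) * (qb (X^m) (2*n) j * P) * X^(ge j)) $ i
        = (-1)^(n+j) * (if ge j = i then 1 else 0)" .
  qed
  then show ?thesis using E by (simp add: X_def P_def ge_def)
qed

definition T :: "nat \<Rightarrow> int fps" where
  "T j = Abs_fps (\<lambda>k. if k > 0 \<and> j dvd k then int j else 0)"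

lemma T_prop:
  assumes j: "j \<ge> 1"
  shows "(1 - fps_X^j) * T j = fps_const (int j) * fps_X^j"
proof (rule fps_ext)
  fix k
  have "((1 - fps_X^j) * T j) $ k = T j $ k - (fps_X^j * T j) $ k"
    by (simp add: algebra_simps)
  also have "\<dots> = (if k > 0 \<and> j dvd k then int j else 0) - (if k < j then 0 else (if k - j > 0 \<and> j dvd (k - j) then int j else 0))"
    by (simp add: fps_X_power_mult_nth T_def)
  also have "\<dots> = (if k = j then int j else 0)"
  proof (cases "k < j")
    case True
    then have "\<not> (k > 0 \<and> j dvd k)" by (auto dest: dvd_imp_le)
    then show ?thesis using True by auto
  next
    case False
    show ?thesis
    proof (cases "k = j")
      case False2: False
      then have "k - j > 0" using False by simp
      moreover have "j dvd k \<longleftrightarrow> j dvd (k - j)"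
      proof -
        have kk: "k = (k - j) + j" using False by simp
        show ?thesis by (subst kk) simp
      qed
      ultimately show ?thesis using False False2 by auto
    qed (use j in auto)
  qed
  also have "\<dots> = (fps_const (int j) * fps_X^j) $ k" by simp
  finally show "((1 - fps_X^j) * T j) $ k = (fps_const (int j) * fps_X^j) $ k" .
qed

lemma logderiv:
  assumes "finite I" "\<And>i. i \<in> I \<Longrightarrow> e i \<ge> 1"
  shows "fps_X * fps_deriv (\<Prod>i\<in>I. 1 - (fps_X::int fps)^(e i)) = - (\<Prod>i\<in>I. 1 - fps_X^(e i)) * (\<Sum>i\<in>I. T (e i))"
  using assms
proof (induction I rule: finite_induct)
  case empty
  then show ?case by simp
next
  case (insert a I)
  define P where "P = (\<Prod>i\<in>I. 1 - (fps_X::int fps)^(e i))"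
  define S where "S = (\<Sum>i\<in>I. T (e i))"
  have IH: "fps_X * fps_deriv P = - P * S" using insert by (simp add: P_def S_def)
  have ea: "e a \<ge> 1" using insert by simp
  have d: "fps_X * fps_deriv (1 - (fps_X::int fps)^(e a)) = - fps_const (int (e a)) * fps_X^(e a)"
  proof -
    have "fps_X * fps_X^(e a - 1) = (fps_X::int fps)^(e a)" using ea
      by (metis Suc_diff_le diff_Suc_1 power_Suc)
    then show ?thesis by (simp add: fps_deriv_power fps_of_nat mult.left_commute)
  qed
  have "fps_X * fps_deriv (\<Prod>i\<in>insert a I. 1 - (fps_X::int fps)^(e i))
     = fps_X * fps_deriv ((1 - fps_X^(e a)) * P)" using insert by (simp add: P_def)
  also have "\<dots> = (1 - fps_X^(e a)) * (fps_X * fps_deriv P) + (fps_X * fps_deriv (1 - fps_X^(e a))) * P"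
    by (simp only: fps_deriv_mult) (simp add: algebra_simps)
  also have "\<dots> = (1 - fps_X^(e a)) * (- P * S) - ((1 - fps_X^(e a)) * T (e a)) * P"
    unfolding IH d T_prop[OF ea] by (simp del: fps_const_neg add: fps_const_neg[symmetric])
  also have "\<dots> = - ((1 - fps_X^(e a)) * P) * (T (e a) + S)" by (simp add: algebra_simps)
  also have "\<dots> = - (\<Prod>i\<in>insert a I. 1 - fps_X^(e i)) * (\<Sum>i\<in>insert a I. T (e i))"
    using insert by (simp add: P_def S_def)
  finally show ?case .
qed

definition Jset :: "nat \<Rightarrow> nat \<Rightarrow> nat set" where
  "Jset m n = {j. 1 \<le> j \<and> j \<le> m*n \<and> (j mod m = 0 \<or> j mod m = 1 \<or> j mod m = m - 1)}"

lemma mod_J1: "(m::nat) \<ge> 1 \<Longrightarrow> t < n \<Longrightarrow> (m*(n-t)-1) mod m = m - 1"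
proof -
  assume m: "m \<ge> 1" and t: "t < n"
  obtain r where r: "n - t = Suc r" using t by (cases "n-t") auto
  have e: "m*(n-t)-1 = (m-1) + r*m" using m unfolding r by (simp add: mult.commute)
  have "((m-1) + r*m) mod m = (m-1) mod m" by (rule mod_mult_self1)
  also have "\<dots> = m - 1" using m by simp
  finally show ?thesis by (simp only: e)
qed

lemma mod_J2: "(m::nat) \<ge> 2 \<Longrightarrow> (m*i+1) mod m = 1"
proof -
  assume m: "m \<ge> 2"
  have "(1 + i*m) mod m = 1 mod m" by (rule mod_mult_self1)
  then show ?thesis using m by (simp add: add.commute mult.commute)
qed

lemma J_union:
  assumes m: "m \<ge> 3"
  shows "Jset m n = (\<lambda>k. m*k) ` {1..n} \<union> (\<lambda>t. m*(n-t)-1) ` {..<n} \<union> (\<lambda>i. m*i+1) ` {..<n}"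
proof (intro equalityI subsetI)
  fix j assume "j \<in> Jset m n"
  then have j1: "1 \<le> j" and j2: "j \<le> m*n" and r: "j mod m = 0 \<or> j mod m = 1 \<or> j mod m = m - 1"
    by (auto simp: Jset_def)
  define q where "q = j div m"
  have jq: "j = m*q + j mod m" by (simp add: q_def)
  consider "j mod m = 0" | "j mod m = 1" | "j mod m = m - 1" using r by auto
  then show "j \<in> (\<lambda>k. m*k) ` {1..n} \<union> (\<lambda>t. m*(n-t)-1) ` {..<n} \<union> (\<lambda>i. m*i+1) ` {..<n}"
  proof cases
    case 1
    then have "j = m*q" using jq by simp
    moreover have "q \<ge> 1" using j1 \<open>j = m*q\<close> by (cases q) auto
    moreover have "q \<le> n" using j2 \<open>j = m*q\<close> m by simp
    ultimately show ?thesis by auto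
  next
    case 2
    then have "j = m*q+1" using jq by simp
    moreover have "q < n"
    proof (rule ccontr)
      assume "\<not> q < n"
      then have "n \<le> q" by simp
      then have "m*n \<le> m*q" by (rule mult_le_mono2)
      then show False using j2 \<open>j = m*q+1\<close> by linarith
    qed
    ultimately show ?thesis by auto
  next
    case 3
    then have jj: "j = m*q + (m-1)" using jq by simp
    have "q < n"
    proof (rule ccontr)
      assume "\<not> q < n"
      then have "n \<le> q" by simp
      then have "m*n \<le> m*q" by (rule mult_le_mono2)
      then show False using j2 jj m by linarith
    qed
    define t where "t = n - Suc q"
    have "t < n" "n - t = Suc q" using \<open>q < n\<close> by (auto simp: t_def)
    moreover have "m * Suc q - 1 = m*q + (m-1)" using m by simp
    ultimately have "j = m*(n-t)-1" "t < n" using jj by auto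
    then show ?thesis by auto
  qed
next
  fix j assume "j \<in> (\<lambda>k. m*k) ` {1..n} \<union> (\<lambda>t. m*(n-t)-1) ` {..<n} \<union> (\<lambda>i. m*i+1) ` {..<n}"
  then consider k where "j = m*k" "1 \<le> k" "k \<le> n" | t where "j = m*(n-t)-1" "t < n"
    | i where "j = m*i+1" "i < n" by (elim UnE imageE; simp only: atLeastAtMost_iff lessThan_iff; blast)
  then show "j \<in> Jset m n"
  proof cases
    case 1
    then show ?thesis using m by (auto simp: Jset_def)
  next
    case 2
    have "m*1 \<le> m*(n-t)" using 2 by (intro mult_le_mono2) auto
    moreover have "m*(n-t) \<le> m*n" by (intro mult_le_mono2) auto
    ultimately have b: "1 \<le> j" "j \<le> m*n" using 2 m by linarith+
    have "j mod m = m - 1" using 2 m mod_J1[of m t n] by simp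
    then show ?thesis using b by (simp add: Jset_def)
  next
    case 3
    have "m*i + m \<le> m*n" using 3 by (metis mult_Suc_right add.commute Suc_leI mult_le_mono2)
    moreover have "j mod m = 1" using 3 m mod_J2[of m i] by simp
    ultimately show ?thesis using 3 m by (auto simp: Jset_def)
  qed
qed

lemma J_prod:
  assumes m: "m \<ge> 3"
  shows "(\<Prod>j\<in>Jset m n. 1 - (fps_X::int fps)^j)
    = poch ((fps_X::int fps)^m) n * (\<Prod>t<n. 1 - (fps_X::int fps)^(m*(n-t)-1)) * (\<Prod>i<n. 1 - (fps_X::int fps)^(m*i+1))"
proof -
  define f where "f j = 1 - (fps_X::int fps)^j" for j
  define J0 where "J0 = (\<lambda>k. m*k) ` {1..n}"
  define J1 where "J1 = (\<lambda>t. m*(n-t)-1) ` {..<n}"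
  define J2 where "J2 = (\<lambda>i. m*i+1) ` {..<n}"
  have i0: "inj_on (\<lambda>k. m*k) {1..n}" using m by (auto simp: inj_on_def)
  have i1: "inj_on (\<lambda>t. m*(n-t)-1) {..<n}"
  proof (rule inj_onI)
    fix x y assume x: "x \<in> {..<n}" and y: "y \<in> {..<n}" and e: "m*(n-x)-1 = m*(n-y)-1"
    have "m*(n-x) \<ge> 1" "m*(n-y) \<ge> 1" using x y m by (auto simp: Suc_le_eq)
    then have "m*(n-x) = m*(n-y)" using e by linarith
    then have "n - x = n - y" using m by simp
    then show "x = y" using x y by simp
  qed
  have i2: "inj_on (\<lambda>i. m*i+1) {..<n}" using m by (auto simp: inj_on_def)
  have d01: "J0 \<inter> J1 = {}"
  proof -
    have "m*k \<noteq> m*(n-t)-1" if "t < n" for k t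
    proof
      assume "m*k = m*(n-t)-1"
      then have "(m*k) mod m = (m*(n-t)-1) mod m" by simp
      then show False using mod_J1[of m t n] that m by simp
    qed
    then show ?thesis unfolding J0_def J1_def by auto
  qed
  have d02: "J0 \<inter> J2 = {}"
  proof -
    have "m*k \<noteq> m*i+1" for k i
    proof
      assume "m*k = m*i+1"
      then have "(m*k) mod m = (1 + i*m) mod m" by (simp add: mult.commute)
      then show False using m by (simp only: mod_mult_self1) simp
    qed
    then show ?thesis unfolding J0_def J2_def by auto
  qed
  have d12: "J1 \<inter> J2 = {}"
  proof -
    have "(m*i+1) mod m = 1" for i
    proof -
      have "(1 + i*m) mod m = 1 mod m" by (rule mod_mult_self1)
      then show ?thesis using m by (simp add: add.commute mult.commute)
    qed
    then show ?thesis using m mod_J1[of m _ n] unfolding J1_def J2_def by force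
  qed
  have "(\<Prod>j\<in>Jset m n. f j) = (\<Prod>j\<in>J0 \<union> J1 \<union> J2. f j)"
    using J_union[OF m] by (simp add: J0_def J1_def J2_def)
  also have "\<dots> = (\<Prod>j\<in>J0. f j) * (\<Prod>j\<in>J1. f j) * (\<Prod>j\<in>J2. f j)"
    using d01 d02 d12 by (simp add: prod.union_disjoint J0_def J1_def J2_def Int_Un_distrib2)
  also have "(\<Prod>j\<in>J0. f j) = poch ((fps_X::int fps)^m) n"
    unfolding J0_def poch_def by (subst prod.reindex[OF i0]) (simp add: f_def power_mult)
  also have "(\<Prod>j\<in>J1. f j) = (\<Prod>t<n. 1 - (fps_X::int fps)^(m*(n-t)-1))"
    unfolding J1_def by (subst prod.reindex[OF i1]) (simp add: f_def)
  also have "(\<Prod>j\<in>J2. f j) = (\<Prod>i<n. 1 - (fps_X::int fps)^(m*i+1))"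
    unfolding J2_def by (subst prod.reindex[OF i2]) (simp add: f_def)
  finally show ?thesis by (simp add: f_def)
qed

lemma J_div:
  assumes m: "m \<ge> 3" and k: "1 \<le> k" "k \<le> n"
  shows "{j \<in> Jset m n. j dvd k} = {d. d dvd k \<and> (d mod m = 0 \<or> d mod m = 1 \<or> d mod m = m - 1)}"
proof -
  have "d \<le> m*n" if "d dvd k" for d
  proof -
    have "d \<le> k" using that k by (simp add: dvd_imp_le)
    also have "k \<le> m*n" using k m by (metis le_trans mult_le_mono1 mult_1 le_Suc_eq numeral_3_eq_3 Suc_leD le_add1 one_le_numeral)
    finally show ?thesis .
  qed
  moreover have "d \<ge> 1" if "d dvd k" for d using that k by (cases d) auto
  ultimately show ?thesis by (auto simp: Jset_def)
qed

lemma Pg_gg: "Pg (m+2) k = gg m (int k)"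
  unfolding Pg_def gg_def by (simp add: algebra_simps)

lemma Qg_gg: "Qg (m+2) k = gg m (- int k)"
proof -
  have "int k * ((int (m+2) - 2) * int k + (int (m+2) - 4)) = (- int k) * (int m * (- int k) - int m + 2)"
    by (simp add: algebra_simps)
  then show ?thesis unfolding Qg_def gg_def by simp
qed

lemma gg_inj:
  assumes m: "m \<ge> 3" and e: "gg m a = gg m b"
  shows "a = b"
proof (rule ccontr)
  assume ne: "a \<noteq> b"
  have "a * (int m * a - int m + 2) = b * (int m * b - int m + 2)"
    using gg2[of m a] gg2[of m b] e by simp
  then have "(a - b) * (int m * (a + b - 1) + 2) = 0" by (simp add: algebra_simps)
  then have z: "int m * (a + b - 1) = -2" using ne by simp
  show False
  proof (cases "a + b - 1 = 0")
    case True then show False using z by simp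
  next
    case False
    then have "\<bar>a + b - 1\<bar> \<ge> 1" by linarith
    then have "int m * 1 \<le> int m * \<bar>a + b - 1\<bar>" by (intro mult_left_mono) auto
    then have "\<bar>int m * (a + b - 1)\<bar> \<ge> int m * 1" by (simp add: abs_mult)
    then show False using z m by simp
  qed
qed

lemma gg_zero: "m \<ge> 3 \<Longrightarrow> gg m s = 0 \<longleftrightarrow> s = 0"
  using gg_inj[of m s 0] by (auto simp: gg_def)

lemma gg_ge:
  assumes m: "m \<ge> 3"
  shows "gg m s \<ge> \<bar>s\<bar>"
proof (cases "s \<ge> 0")
  case True
  have "s * (int m * s - int m + 2) = s * (int m * (s - 1)) + 2 * s" by (simp add: algebra_simps)
  moreover have "s * (int m * (s - 1)) \<ge> 0"
    using True m by (cases "s = 0") (auto intro!: mult_nonneg_nonneg)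
  ultimately have "2 * gg m s \<ge> 2 * s" using gg2[of m s] by linarith
  then show ?thesis using True by simp
next
  case False
  define r where "r = - s"
  have r: "r \<ge> 1" using False r_def by simp
  have "s * (int m * s - int m + 2) = r * (int m * (r - 1)) + r * (2 * int m - 2)"
    by (simp add: r_def algebra_simps)
  moreover have "r * (int m * (r - 1)) \<ge> 0" using r m by (auto intro!: mult_nonneg_nonneg)
  moreover have "r * (2 * int m - 2) \<ge> r * 2" using r m by (intro mult_left_mono) auto
  ultimately have "2 * gg m s \<ge> 2 * r" using gg2[of m s] by linarith
  then show ?thesis using False r_def by simp
qed

lemma sum_single:
  assumes "finite A" "j0 \<in> A" "\<And>j. j \<in> A \<Longrightarrow> P j \<longleftrightarrow> j = j0"
  shows "(\<Sum>j\<in>A. f j * (if P j then 1 else 0)) = (f j0 :: int)"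
proof -
  have "(\<Sum>j\<in>A. f j * (if P j then 1 else 0)) = (\<Sum>j\<in>A. if j = j0 then f j else 0)"
    by (rule sum.cong) (use assms in auto)
  also have "\<dots> = f j0" using assms by simp
  finally show ?thesis .
qed

lemma ge_eq: "m \<ge> 3 \<Longrightarrow> nat (gg m s) = n \<longleftrightarrow> gg m s = int n"
  using gg_nonneg[of m s] by auto

lemma E_eg:
  assumes m: "m \<ge> 3" and n: "n \<ge> 1"
  shows "(\<Sum>j\<le>2*n. (-1)^(n+j) * (if nat (gg m (int j - int n)) = n then 1 else 0) :: int) = eg (m+2) n"
proof (cases "\<exists>k\<ge>1. int n = Pg (m+2) k \<or> int n = Qg (m+2) k")
  case True
  then obtain k where k: "k \<ge> 1" "int n = Pg (m+2) k \<or> int n = Qg (m+2) k" by blast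
  have uniq: "(THE k. k \<ge> 1 \<and> (int n = Pg (m+2) k \<or> int n = Qg (m+2) k)) = k"
  proof (rule the_equality)
    show "k \<ge> 1 \<and> (int n = Pg (m+2) k \<or> int n = Qg (m+2) k)" using k by blast
  next
    fix k' assume k': "k' \<ge> 1 \<and> (int n = Pg (m+2) k' \<or> int n = Qg (m+2) k')"
    then have "int k' = int k \<or> int k' = - int k \<or> - int k' = int k \<or> - int k' = - int k"
      using k gg_inj[OF m] unfolding Pg_gg Qg_gg by metis
    then show "k' = k" using k k' by auto
  qed
  have egv: "eg (m+2) n = (-1)^k" using True n uniq by (simp add: eg_def)
  have kn: "k \<le> n" using k gg_ge[OF m, of "int k"] gg_ge[OF m, of "- int k"]
    unfolding Pg_gg Qg_gg by auto
  from k(2) show ?thesis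
  proof
    assume P: "int n = Pg (m+2) k"
    have "(\<Sum>j\<le>2*n. (-1)^(n+j) * (if nat (gg m (int j - int n)) = n then 1 else 0) :: int) = (-1)^(n+(n+k))"
    proof (rule sum_single)
      show "n + k \<in> {..2*n}" using kn by simp
      fix j assume "j \<in> {..2*n}"
      have gk: "int n = gg m (int k)" using P Pg_gg by simp
      show "nat (gg m (int j - int n)) = n \<longleftrightarrow> j = n + k"
        unfolding ge_eq[OF m]
      proof
        assume "gg m (int j - int n) = int n"
        then have "gg m (int j - int n) = gg m (int k)" using gk by simp
        then have "int j - int n = int k" by (rule gg_inj[OF m])
        then show "j = n + k" by simp
      next
        assume "j = n + k" then show "gg m (int j - int n) = int n" using gk by simp
      qed
    qed simp
    also have "\<dots> = (-1)^k" by (simp add: power_add)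
    finally show ?thesis using egv by simp
  next
    assume Q: "int n = Qg (m+2) k"
    have "(\<Sum>j\<le>2*n. (-1)^(n+j) * (if nat (gg m (int j - int n)) = n then 1 else 0) :: int) = (-1)^(n+(n-k))"
    proof (rule sum_single)
      show "n - k \<in> {..2*n}" by simp
      fix j assume "j \<in> {..2*n}"
      have gk: "int n = gg m (- int k)" using Q Qg_gg by simp
      show "nat (gg m (int j - int n)) = n \<longleftrightarrow> j = n - k"
        unfolding ge_eq[OF m]
      proof
        assume "gg m (int j - int n) = int n"
        then have "gg m (int j - int n) = gg m (- int k)" using gk by simp
        then have "int j - int n = - int k" by (rule gg_inj[OF m])
        then show "j = n - k" by simp
      next
        assume "j = n - k" then show "gg m (int j - int n) = int n" using gk kn by (simp add: of_nat_diff)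
      qed
    qed simp
    also have "\<dots> = (-1)^k"
    proof -
      have e: "n + (n - k) = 2*(n-k) + k" using kn by simp
      have "(-1::int)^(2*(n-k) + k) = (-1)^k" by (simp only: power_add power_mult) simp
      then show ?thesis by (simp only: e)
    qed
    finally show ?thesis using egv by simp
  qed
next
  case False
  have "eg (m+2) n = 0" using False n by (simp add: eg_def)
  moreover have "(\<Sum>j\<le>2*n. (-1)^(n+j) * (if nat (gg m (int j - int n)) = n then 1 else 0) :: int) = 0"
  proof (rule sum.neutral, rule ballI)
    fix j assume j: "j \<in> {..2*n}"
    have "nat (gg m (int j - int n)) \<noteq> n"
    proof
      assume "nat (gg m (int j - int n)) = n"
      then have g: "gg m (int j - int n) = int n" using ge_eq[OF m] by simp
      consider "j = n" | "j > n" | "j < n" by linarith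
      then show False
      proof cases
        case 1 then show False using g n by (simp add: gg_def)
      next
        case 2
        then have "int j - int n = int (j - n)" "j - n \<ge> 1" by auto
        then show False using False g unfolding Pg_gg by force
      next
        case 3
        then have "int j - int n = - int (n - j)" "n - j \<ge> 1" by auto
        then show False using False g unfolding Qg_gg by force
      qed
    qed
    then show "(-1)^(n+j) * (if nat (gg m (int j - int n)) = n then 1 else 0) = (0::int)" by simp
  qed
  ultimately show ?thesis by simp
qed

lemma sigma'_nonpos: "x \<le> 0 \<Longrightarrow> sigma' m x = 0"
  by (simp add: sigma'_def)

lemma sum_transform:
  assumes m: "m \<ge> 3" and n: "n \<ge> 1"
  shows "(\<Sum>i\<in>{1..n}. (\<Sum>j\<le>2*n. (-1)^(n+j) * (if nat (gg m (int j - int n)) = i then 1 else 0)) * sigma' m (int n - int i))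
    = - (\<Sum>k = 1..n - 1. (-1) ^ (k + 1) * (sigma' m (int n - Pg (m + 2) k) + sigma' m (int n - Qg (m + 2) k)))"
proof -
  define h where "h j = (if j = n then 0 else sigma' m (int n - gg m (int j - int n)))" for j
  define f where "f k = (-1::int)^k * (sigma' m (int n - gg m (int k)) + sigma' m (int n - gg m (- int k)))" for k
  have S1: "(\<Sum>i\<in>{1..n}. (\<Sum>j\<le>2*n. (-1)^(n+j) * (if nat (gg m (int j - int n)) = i then 1 else 0)) * sigma' m (int n - int i))
     = (\<Sum>j\<le>2*n. (-1)^(n+j) * h j)"
  proof -
    have "(\<Sum>i\<in>{1..n}. (\<Sum>j\<le>2*n. (-1)^(n+j) * (if nat (gg m (int j - int n)) = i then 1 else 0)) * sigma' m (int n - int i))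
      = (\<Sum>j\<le>2*n. \<Sum>i\<in>{1..n}. (-1)^(n+j) * ((if nat (gg m (int j - int n)) = i then 1 else 0) * sigma' m (int n - int i)))"
      by (simp only: sum_distrib_right mult.assoc) (rule sum.swap)
    also have "\<dots> = (\<Sum>j\<le>2*n. (-1)^(n+j) * h j)"
    proof (rule sum.cong[OF refl])
      fix j assume "j \<in> {..2*n}"
      define g where "g = nat (gg m (int j - int n))"
      have gi: "int g = gg m (int j - int n)" using gg_nonneg[of m] m by (simp add: g_def)
      have "(\<Sum>i\<in>{1..n}. (-1)^(n+j) * ((if g = i then 1 else 0) * sigma' m (int n - int i)))
          = (\<Sum>i\<in>{1..n}. (if i = g then (-1)^(n+j) * sigma' m (int n - int g) else 0))"
        by (rule sum.cong) auto
      also have "\<dots> = (-1)^(n+j) * (if g \<in> {1..n} then sigma' m (int n - int g) else 0)"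
        by simp
      also have "\<dots> = (-1)^(n+j) * h j"
      proof (cases "j = n")
        case True
        then have "g = 0" by (simp add: g_def gg_def)
        then show ?thesis using True by (simp add: h_def)
      next
        case False
        then have "gg m (int j - int n) \<noteq> 0" using gg_zero[OF m] by simp
        then have "g \<ge> 1" using gi by linarith
        moreover have "g > n \<Longrightarrow> sigma' m (int n - int g) = 0" by (rule sigma'_nonpos) simp
        ultimately show ?thesis using False by (auto simp: h_def gi[symmetric])
      qed
      finally show "(\<Sum>i\<in>{1..n}. (-1)^(n+j) * ((if nat (gg m (int j - int n)) = i then 1 else 0) * sigma' m (int n - int i)))
          = (-1)^(n+j) * h j" by (simp add: g_def)
    qed
    finally show ?thesis .
  qed
  have S2: "(\<Sum>j\<le>2*n. (-1)^(n+j) * h j) = (\<Sum>k\<in>{1..n}. f k)"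
  proof -
    have U: "{..2*n} = {..<n} \<union> ({n} \<union> {Suc n..2*n})" by auto
    have "(\<Sum>j\<le>2*n. (-1)^(n+j) * h j) = (\<Sum>j<n. (-1)^(n+j) * h j) + ((-1)^(n+n) * h n + (\<Sum>j\<in>{Suc n..2*n}. (-1)^(n+j) * h j))"
      unfolding U by (subst sum.union_disjoint, auto)+
    also have "h n = 0" by (simp add: h_def)
    also have "(\<Sum>j\<in>{Suc n..2*n}. (-1)^(n+j) * h j) = (\<Sum>k\<in>{1..n}. (-1)^k * sigma' m (int n - gg m (int k)))"
    proof -
      have "(\<Sum>j\<in>{Suc n..2*n}. (-1)^(n+j) * h j) = (\<Sum>j\<in>{1+n..n+n}. (-1)^(n+j) * h j)" by (simp add: mult_2)
      also have "\<dots> = (\<Sum>k\<in>{1..n}. (-1)^(n+(k+n)) * h (k+n))" by (rule sum.shift_bounds_cl_nat_ivl)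
      also have "\<dots> = (\<Sum>k\<in>{1..n}. (-1)^k * sigma' m (int n - gg m (int k)))"
      proof (rule sum.cong[OF refl])
        fix k assume "k \<in> {1..n}"
        have "(-1::int)^(n+(k+n)) = (-1)^k" by (simp add: power_add mult_2[symmetric] power_mult)
        moreover have "h (k+n) = sigma' m (int n - gg m (int k))" using \<open>k \<in> {1..n}\<close> by (simp add: h_def)
        ultimately show "(-1)^(n+(k+n)) * h (k+n) = (-1)^k * sigma' m (int n - gg m (int k))" by simp
      qed
      finally show ?thesis .
    qed
    also have "(\<Sum>j<n. (-1)^(n+j) * h j) = (\<Sum>k\<in>{1..n}. (-1)^k * sigma' m (int n - gg m (- int k)))"
    proof (rule sym, rule sum.reindex_bij_witness[of _ "\<lambda>k. n - k" "\<lambda>j. n - j"])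
      fix k assume k: "k \<in> {1..n}"
      show "n - (n - k) = k" using k by simp
      show "n - k \<in> {..<n}" using k by simp
      have kn: "k \<le> n" using k by simp
      have e: "n + (n - k) = 2*(n-k) + k" using kn by linarith
      have "(-1::int)^(n + (n-k)) = (-1)^k" unfolding e by (simp only: power_add power_mult) simp
      moreover have "h (n - k) = sigma' m (int n - gg m (- int k))" using k kn by (auto simp: h_def of_nat_diff)
      ultimately show "(-1)^(n + (n-k)) * h (n - k) = (-1)^k * sigma' m (int n - gg m (- int k))" by simp
    next
      fix j assume j: "j \<in> {..<n}"
      show "n - (n - j) = j" using j by simp
      show "n - j \<in> {1..n}" using j by simp
    qed
    finally show ?thesis by (simp add: f_def sum.distrib algebra_simps)
  qed
  have S3: "(\<Sum>k\<in>{1..n}. f k) = (\<Sum>k\<in>{1..n-1}. f k)"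
  proof -
    obtain p where p: "n = Suc p" using n by (cases n) auto
    have "f n = 0"
    proof -
      have "sigma' m (int n - gg m (int n)) = 0" using gg_ge[OF m, of "int n"] by (intro sigma'_nonpos) simp
      moreover have "sigma' m (int n - gg m (- int n)) = 0" using gg_ge[OF m, of "- int n"] by (intro sigma'_nonpos) simp
      ultimately show ?thesis by (simp add: f_def)
    qed
    then show ?thesis using p by simp
  qed
  have S4: "(\<Sum>k\<in>{1..n-1}. f k) = - (\<Sum>k = 1..n - 1. (-1) ^ (k + 1) * (sigma' m (int n - Pg (m + 2) k) + sigma' m (int n - Qg (m + 2) k)))"
    unfolding Pg_gg Qg_gg by (simp add: f_def sum_negf[symmetric])
  show ?thesis using S1 S2 S3 S4 by simp
qed

theorem theorem2p9:
  fixes m n :: nat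
  assumes "m \<ge> 3" and "n \<ge> 1"
  shows "sigma' m (int n) = - int n * eg (m + 2) n
     + (\<Sum>k = 1..n - 1. (-1) ^ (k + 1) *
          (sigma' m (int n - Pg (m + 2) k) + sigma' m (int n - Qg (m + 2) k)))"
proof -
  note m = assms(1) and n = assms(2)
  define E where "E i = (\<Sum>j\<le>2*n. (-1)^(n+j) * (if nat (gg m (int j - int n)) = i then 1 else 0) :: int)" for i
  define F where "F = (\<Prod>j\<in>Jset m n. 1 - (fps_X::int fps)^j)"
  define S where "S = (\<Sum>j\<in>Jset m n. T j)"
  have finJ: "finite (Jset m n)" by (rule finite_subset[of _ "{..m*n}"]) (auto simp: Jset_def)
  have FE: "F $ i = E i" if "i \<le> n" for i
    unfolding F_def J_prod[OF m] E_def by (rule F_coeff[OF m n that])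
  have SS: "S $ k = sigma' m (int k)" if "k \<le> n" for k
  proof (cases "k = 0")
    case True
    then show ?thesis by (simp add: S_def fps_sum_nth T_def sigma'_def)
  next
    case False
    then have k1: "1 \<le> k" by simp
    have "S $ k = (\<Sum>j\<in>Jset m n. if j dvd k then int j else 0)"
      using False by (simp add: S_def fps_sum_nth T_def)
    also have "\<dots> = (\<Sum>j\<in>{j \<in> Jset m n. j dvd k}. int j)"
      using finJ by (simp add: sum.inter_filter)
    also have "\<dots> = sigma' m (int k)"
      unfolding J_div[OF m k1 that] sigma'_def using False by simp
    finally show ?thesis .
  qed
  have LD: "fps_X * fps_deriv F = - F * S"
    unfolding F_def S_def using logderiv[OF finJ, of id] by (simp add: Jset_def)
  have lhs: "(fps_X * fps_deriv F) $ n = int n * E n"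
  proof -
    have "(fps_X * fps_deriv F) $ n = fps_deriv F $ (n - 1)" using n by simp
    also have "\<dots> = int n * F $ n" using n by simp
    finally show ?thesis using FE[of n] by simp
  qed
  have rhs: "(- F * S) $ n = - (\<Sum>i=0..n. E i * sigma' m (int n - int i))"
  proof -
    have "(- F * S) $ n = - (\<Sum>i=0..n. F $ i * S $ (n - i))" by (simp add: fps_mult_nth sum_negf)
    also have "(\<Sum>i=0..n. F $ i * S $ (n - i)) = (\<Sum>i=0..n. E i * sigma' m (int n - int i))"
      by (rule sum.cong) (auto simp: FE SS of_nat_diff)
    finally show ?thesis .
  qed
  have E0: "E 0 = 1"
  proof -
    have "E 0 = (-1)^(n+n)" unfolding E_def
    proof (rule sum_single)
      fix j assume "j \<in> {..2*n}"
      show "nat (gg m (int j - int n)) = 0 \<longleftrightarrow> j = n"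
        using ge_eq[OF m, of "int j - int n" 0] gg_zero[OF m] by auto
    qed auto
    then show ?thesis by (simp add: mult_2[symmetric] power_mult)
  qed
  have main: "int n * E n = - (\<Sum>i=0..n. E i * sigma' m (int n - int i))"
    using LD lhs rhs by simp
  have split: "(\<Sum>i=0..n. E i * sigma' m (int n - int i)) = sigma' m (int n) + (\<Sum>i\<in>{1..n}. E i * sigma' m (int n - int i))"
    by (simp add: sum.atLeast_Suc_atMost E0)
  have "sigma' m (int n) = - int n * E n - (\<Sum>i\<in>{1..n}. E i * sigma' m (int n - int i))"
    using main split by simp
  also have "E n = eg (m+2) n" unfolding E_def by (rule E_eg[OF m n])
  also have "(\<Sum>i\<in>{1..n}. E i * sigma' m (int n - int i)) = - (\<Sum>k = 1..n - 1. (-1) ^ (k + 1) * (sigma' m (int n - Pg (m + 2) k) + sigma' m (int n - Qg (m + 2) k)))"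
    unfolding E_def by (rule sum_transform[OF m n])
  finally show ?thesis by simp
qed

end
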